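(* Let $\mathcal{M}$ be a set of mappings and $q(\vec x)\leftarrow L_1(\vec v_1),\dots,L_n(\vec v_n)$ a conjunctive query such that all rows of the answer template matrix of $\mathrm{unf}(q,\mathrm{wrap}(\mathcal{M}))$ are equal to some tuple $\vec f$ of function symbols. Let $L_i(\vec v_i)$ be an atom of $q$ with $\vec v_i\subseteq\vec x$ (as sets of variables). Then for every pair of rules $$r_1=q_u(\vec f(\vec y))\leftarrow V_1(\vec y_1),\dots,V_i(\vec y_i),\dots,V_n(\vec y_n),\qquad r_2=q'_u(\vec f(\vec y'))\leftarrow V'_1(\vec y'_1),\dots,V'_i(\vec y'_i),\dots,V'_n(\vec y'_n)$$ in the program of $\mathrm{unf}(q,\mathrm{wrap}(\mathcal{M}))$, where the $j$-th body atom comes from the mapping matched with $L_j$, it holds that $V_i=V'_i$.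
   Context: A mapping is $L(\vec f(\vec x))\leftsquigarrow V(\vec x)$ with $L$ a concept or role name, $\vec f(\vec x)$ a tuple of terms each of the form $g(\vec y)$ ($g$ a function symbol, $\vec y\subseteq\vec x$), and $V$ a view name. Signature: $\mathrm{sign}(m)=(L,\vec f)$. Unfolding of a CQ $q(\vec x)\leftarrow L_1(\vec v_1),\dots,L_n(\vec v_n)$: the non-recursive Datalog query $(q_{\mathrm{unf}}(\vec x),\Pi)$ where $\Pi$ is a minimal (up to renaming) set of rules containing, for every tuple $(m_1,\dots,m_n)$ of mappings with $m_i=L_i(\vec f_i(\vec x_i))\leftsquigarrow V_i(\vec z_i)$ and every mgu $\sigma$ of $\{(L_i(\vec v_i),L_i(\vec f_i(\vec x_i)))\}$, the rule $q_{\mathrm{unf}}(\sigma(\vec x))\leftarrow V_1(\sigma(\vec z_1)),\dots,V_n(\sigma(\vec z_n))$. Wrap: for each signature $(L,\vec f)$, the mappings of that signature $\{L(\vec f(\vec v_i))\leftsquigarrow V_i(\vec v_i)\}_i$ are replaced by the single mapping $L(\vec f(\vec v))\leftsquigarrow W(\vec v)$ with $W$ a fresh view for $(W(\vec v),\{W(\vec v_i)\leftarrow V_i(\vec v_i)\}_i)$; $\mathrm{wrap}(\mathcal{M})$ is the union over all signatures (so it contains at most one mapping per signature). Answer template matrix: if the rules of an unfolding are $q_{\mathrm{unf}}(\vec f_j(\vec y_j))\leftarrow V^j_1,\dots,V^j_n$ for $1\le j\le m$, where $\vec f_j$ is the tuple of function symbols in the head, its rows are $\vec f_1,\dots,\vec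 f_m$. *)

theory Defs
  imports Main
begin

datatype ('f, 'v) trm = Var 'v | Fn 'f "('f, 'v) trm list"

fun subst :: "('v \<Rightarrow> ('f, 'u) trm) \<Rightarrow> ('f, 'v) trm \<Rightarrow> ('f, 'u) trm" where
  "subst \<sigma> (Var v) = \<sigma> v"
| "subst \<sigma> (Fn g ts) = Fn g (map (subst \<sigma>) ts)"

definition unifier :: "('v \<Rightarrow> ('f, 'v) trm) \<Rightarrow> (('f, 'v) trm \<times> ('f, 'v) trm) set \<Rightarrow> bool" where
  "unifier \<sigma> E \<longleftrightarrow> (\<forall>(s, t) \<in> E. subst \<sigma> s = subst \<sigma> t)"

definition is_mgu :: "('v \<Rightarrow> ('f, 'v) trm) \<Rightarrow> (('f, 'v) trm \<times> ('f, 'v) trm) set \<Rightarrow> bool" where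
  "is_mgu \<sigma> E \<longleftrightarrow> unifier \<sigma> E \<and>
     (\<forall>\<tau>. unifier \<tau> E \<longrightarrow> (\<exists>\<rho>. \<forall>v. \<tau> v = subst \<rho> (\<sigma> v)))"

text \<open>A mapping  L(g_1(y_1),...,g_k(y_k)) ~> V(z) : concept/role name L, a tuple of
  terms g_j(y_j) (function symbol + argument variables), a view name V and its
  argument variables z.\<close>

record ('c, 'f, 'w, 'v) mapping =
  m_pred :: 'c
  m_terms :: "('f \<times> 'v list) list"
  m_view :: 'w
  m_args :: "'v list"

definition wf_mapping :: "('f \<Rightarrow> nat) \<Rightarrow> ('c, 'f, 'w, 'v) mapping \<Rightarrow> bool" where
  "wf_mapping ar m \<longleftrightarrow>
     (\<forall>(g, ys) \<in> set (m_terms m). length ys = ar g \<and> set ys \<subseteq> set (m_args m))"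

definition sign :: "('c, 'f, 'w, 'v) mapping \<Rightarrow> 'c \<times> 'f list" where
  "sign m = (m_pred m, map fst (m_terms m))"

text \<open>Wrapping: for each signature (L, f) there is a single mapping
  L(f(v)) ~> W(v) with v fresh distinct variables; the fresh view W is named by
  (identified with) the signature itself, so distinct signatures get distinct
  fresh views.  Variables of the wrapped mapping: (j,k) = k-th argument of j-th term.\<close>
definition wrap_mapping :: "('f \<Rightarrow> nat) \<Rightarrow> 'c \<times> 'f list
    \<Rightarrow> ('c, 'f, 'c \<times> 'f list, nat \<times> nat) mapping" where
  "wrap_mapping ar s =
     (let ts = map (\<lambda>(j, g). (g, map (\<lambda>k. (j, k)) [0..<ar g])) (enumerate 0 (snd s))
      in \<lparr> m_pred = fst s, m_terms = ts, m_view = s, m_args = concat (map snd ts) \<rparr>)"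

definition wrap :: "('f \<Rightarrow> nat) \<Rightarrow> ('c, 'f, 'w, 'v) mapping set
    \<Rightarrow> ('c, 'f, 'c \<times> 'f list, nat \<times> nat) mapping set" where
  "wrap ar M = wrap_mapping ar ` (sign ` M)"

text \<open>A CQ q(x) <- L_1(v_1),...,L_n(v_n): head variable list and list of body atoms.
  Safety: head variables occur in the body.\<close>
type_synonym ('c, 'v) cq = "'v list \<times> ('c \<times> 'v list) list"

definition wf_cq :: "('c, 'v) cq \<Rightarrow> bool" where
  "wf_cq q \<longleftrightarrow> set (fst q) \<subseteq> (\<Union>(L, vs) \<in> set (snd q). set vs)"

text \<open>Datalog rule q_unf(head) <- V_1(args_1),...,V_n(args_n).\<close>
type_synonym ('f, 'w, 'x) rule = "('f, 'x) trm list \<times> ('w \<times> ('f, 'x) trm list) list"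

text \<open>Variables of the unification problem: query variables (Inl) and the variables
  of the i-th mapping of the tuple (Inr (i, y)); this renames the mappings apart.\<close>
definition unif_problem :: "('c, 'v) cq \<Rightarrow> ('c, 'f, 'w, 'u) mapping list
    \<Rightarrow> (('f, 'v + nat \<times> 'u) trm \<times> ('f, 'v + nat \<times> 'u) trm) set" where
  "unif_problem q ms =
     {(Var (Inl (snd (snd q ! i) ! k)),
       Fn (fst (m_terms (ms ! i) ! k)) (map (\<lambda>y. Var (Inr (i, y))) (snd (m_terms (ms ! i) ! k))))
      | i k. i < length (snd q) \<and> k < length (snd (snd q ! i))}"

text \<open>The program of unf(q, M): all rules obtained from a tuple of mappings
  (m_1,...,m_n) with m_i matched to atom L_i(v_i) and an mgu \<sigma> of the atom pairs.
  (The set is closed under renaming.)\<close>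
definition unf_program :: "('c, 'v) cq \<Rightarrow> ('c, 'f, 'w, 'u) mapping set
    \<Rightarrow> ('f, 'w, 'v + nat \<times> 'u) rule set" where
  "unf_program q M =
     {(map (\<lambda>x. \<sigma> (Inl x)) (fst q),
       map (\<lambda>i. (m_view (ms ! i), map (\<lambda>z. \<sigma> (Inr (i, z))) (m_args (ms ! i))))
           [0..<length (snd q)])
      | ms \<sigma>. length ms = length (snd q) \<and> set ms \<subseteq> M \<and>
         (\<forall>i < length (snd q). m_pred (ms ! i) = fst (snd q ! i) \<and>
              length (m_terms (ms ! i)) = length (snd (snd q ! i))) \<and>
         is_mgu \<sigma> (unif_problem q ms)}"

fun head_sym :: "('f, 'v) trm \<Rightarrow> 'f option" where
  "head_sym (Fn g _) = Some g"
| "head_sym (Var _) = None"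

definition template_row :: "('f, 'w, 'x) rule \<Rightarrow> 'f option list" where
  "template_row r = map head_sym (fst r)"

end

theory Submission
  imports Defs
begin

lemma wrap_view: "m_view (wrap_mapping ar s) = s"
  by (simp add: wrap_mapping_def Let_def)

lemma wrap_pred: "m_pred (wrap_mapping ar s) = fst s"
  by (simp add: wrap_mapping_def Let_def)

lemma wrap_terms_fst: "map fst (m_terms (wrap_mapping ar s)) = snd s"
proof -
  have "map fst (map (\<lambda>(j, g). (g, map (\<lambda>k. (j, k)) [0..<ar g])) (enumerate n xs)) = xs"
    for n and xs :: "'a list"
    by (induction xs arbitrary: n) auto
  then show ?thesis by (simp add: wrap_mapping_def Let_def)
qed

lemma key:
  assumes "\<forall>r \<in> unf_program q (wrap ar M). template_row r = map Some f"
    and "i < length (snd q)"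
    and "set (snd (snd q ! i)) \<subseteq> set (fst q)"
    and "r \<in> unf_program q (wrap ar M)"
  shows "fst (snd r ! i) = (fst (snd q ! i),
           map (\<lambda>v. f ! (SOME j. j < length (fst q) \<and> fst q ! j = v)) (snd (snd q ! i)))"
proof -
  from assms(4) obtain ms \<sigma> where r: "r = (map (\<lambda>x. \<sigma> (Inl x)) (fst q),
       map (\<lambda>i. (m_view (ms ! i), map (\<lambda>z. \<sigma> (Inr (i, z))) (m_args (ms ! i))))
           [0..<length (snd q)])"
    and len: "length ms = length (snd q)" and sub: "set ms \<subseteq> wrap ar M"
    and prd: "\<forall>i < length (snd q). m_pred (ms ! i) = fst (snd q ! i) \<and>
              length (m_terms (ms ! i)) = length (snd (snd q ! i))"
    and mgu: "is_mgu \<sigma> (unif_problem q ms)"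
    unfolding unf_program_def by blast
  have tr: "template_row r = map Some f" using assms(1,4) by blast
  have msi: "ms ! i \<in> wrap ar M" using sub len assms(2) by auto
  then obtain s where s: "ms ! i = wrap_mapping ar s" unfolding wrap_def by blast
  have fs: "fst s = fst (snd q ! i)" using prd assms(2) s wrap_pred by metis
  have lens: "length (snd s) = length (snd (snd q ! i))"
    using prd assms(2) s wrap_terms_fst by (metis length_map)
  have "snd s ! k = f ! (SOME j. j < length (fst q) \<and> fst q ! j = snd (snd q ! i) ! k)"
    if k: "k < length (snd (snd q ! i))" for k
  proof -
    let ?v = "snd (snd q ! i) ! k"
    have "?v \<in> set (fst q)" using assms(3) k by auto
    then have ex: "\<exists>j. j < length (fst q) \<and> fst q ! j = ?v" by (simp add: in_set_conv_nth)
    define j where "j = (SOME j. j < length (fst q) \<and> fst q ! j = ?v)"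
    have j: "j < length (fst q) \<and> fst q ! j = ?v" unfolding j_def using someI_ex[OF ex] .
    have "(Var (Inl ?v),
       Fn (fst (m_terms (ms ! i) ! k)) (map (\<lambda>y. Var (Inr (i, y))) (snd (m_terms (ms ! i) ! k))))
       \<in> unif_problem q ms" unfolding unif_problem_def using assms(2) k by blast
    then have "\<sigma> (Inl ?v) = Fn (fst (m_terms (ms ! i) ! k)) (map (subst \<sigma>) (map (\<lambda>y. Var (Inr (i, y))) (snd (m_terms (ms ! i) ! k))))"
      using mgu unfolding is_mgu_def unifier_def by fastforce
    then have h1: "head_sym (\<sigma> (Inl ?v)) = Some (fst (m_terms (ms ! i) ! k))" by simp
    have lf: "length f = length (fst q)" using tr r
    proof -
      have "length (template_row r) = length (fst q)" using r by (simp add: template_row_def)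
      then show ?thesis using tr by (metis length_map)
    qed
    have "template_row r ! j = Some (f ! j)" using tr j lf by simp
    then have "head_sym (\<sigma> (Inl ?v)) = Some (f ! j)" using j r by (simp add: template_row_def)
    with h1 have "fst (m_terms (ms ! i) ! k) = f ! j" by simp
    moreover have "k < length (m_terms (ms ! i))" using prd assms(2) k by auto
    ultimately have "map fst (m_terms (ms ! i)) ! k = f ! j" by simp
    then show ?thesis using s wrap_terms_fst j_def by metis
  qed
  then have "snd s = map (\<lambda>v. f ! (SOME j. j < length (fst q) \<and> fst q ! j = v)) (snd (snd q ! i))"
    using lens by (intro nth_equalityI) auto
  moreover have "fst (snd r ! i) = s" using r assms(2) s wrap_view by simp
  ultimately show ?thesis using fs by (metis prod.collapse)
qed

theorem theorem7:
  fixes ar :: "'f \<Rightarrow> nat"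
    and M :: "('c, 'f, 'w, 'v) mapping set"
    and q :: "('c, 'v) cq"
    and f :: "'f list"
    and i :: nat
  assumes "\<forall>m \<in> M. wf_mapping ar m"
    and "wf_cq q"
    and "\<forall>r \<in> unf_program q (wrap ar M). template_row r = map Some f"
    and "i < length (snd q)"
    and "set (snd (snd q ! i)) \<subseteq> set (fst q)"
  shows "\<forall>r1 \<in> unf_program q (wrap ar M). \<forall>r2 \<in> unf_program q (wrap ar M).
           fst (snd r1 ! i) = fst (snd r2 ! i)"
  using key[OF assms(3,4,5)] by simp

end
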